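(* Let $0<\alpha<2$ and let $X(t)$, $t\in T$ ($T\ne\emptyset$), be a separable symmetric $\alpha$-stable process. Let $\rho(s,t)$ be the scale parameter of $X(t)-X(s)$, assume $\sigma=\operatorname{diam}(T,\rho)<\infty$ and $(T,\rho)$ relatively compact, and let $N(\varepsilon)$ be the covering numbers of $(T,\rho)$. Assume $N(\varepsilon)\le\Psi(\varepsilon)$ for all $\varepsilon>0$, where $\Psi$ is a non-increasing continuous function satisfying $C_1\Psi(\varepsilon)\le\Psi(\varepsilon/2)$ for all $0<\varepsilon\le\sigma$, for some $C_1>1$. If $$\int_0^\sigma\Big(\frac{\Psi(u)}{u}\Big)^{\frac1{\alpha+1}}du<\infty,$$ then the process $X$ is almost surely bounded.
   Context: The scale parameter $\rho(s,t)$ is defined by $\mathbb{E}\exp\{iu(X(t)-X(s))\}=\exp\{-\rho(t,s)^\alpha|u|^\alpha\}$. A process is symmetric $\alpha$-stable if all finite-dimensional distributions are symmetric $\alpha$-stable vectors. $N(\varepsilon)$ is the minimal number of points $t_1,\dots,t_n\in T$ such that every $t\in T$ has $\rho(t,t_i)\le\varepsilon$ for some $i$. *)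

theory Defs
  imports "HOL-Probability.Probability"
begin

text \<open>A random vector indexed by a finite set F (the family X i, i in F) on the probability
space M is symmetric alpha-stable if its characteristic function has the form
exp(- integral over the unit sphere of |<u,s>|^alpha dGamma(s)) for a finite symmetric
measure Gamma (the spectral measure) on the unit sphere of R^F.\<close>
definition sas_vector :: "real \<Rightarrow> 'a measure \<Rightarrow> ('i \<Rightarrow> 'a \<Rightarrow> real) \<Rightarrow> 'i set \<Rightarrow> bool" where
  "sas_vector \<alpha> M X F \<longleftrightarrow>
     (\<exists>\<Gamma>. finite_measure \<Gamma> \<and> sets \<Gamma> = sets (PiM F (\<lambda>_. borel)) \<and>
          emeasure \<Gamma> {s \<in> space \<Gamma>. (\<Sum>i\<in>F. (s i)\<^sup>2) \<noteq> 1} = 0 \<and>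
          distr \<Gamma> (PiM F (\<lambda>_. borel)) (\<lambda>s. \<lambda>i\<in>F. - s i) = \<Gamma> \<and>
          (\<forall>u :: 'i \<Rightarrow> real.
             (CLINT \<omega>|M. iexp (\<Sum>i\<in>F. u i * X i \<omega>))
               = complex_of_real (exp (- (\<integral>s. \<bar>\<Sum>i\<in>F. u i * s i\<bar> powr \<alpha> \<partial>\<Gamma>)))))"

definition sas_process :: "real \<Rightarrow> 'a measure \<Rightarrow> ('t \<Rightarrow> 'a \<Rightarrow> real) \<Rightarrow> 't set \<Rightarrow> bool" where
  "sas_process \<alpha> M X T \<longleftrightarrow>
     (\<forall>t\<in>T. X t \<in> borel_measurable M) \<and>
     (\<forall>F. finite F \<and> F \<subseteq> T \<longrightarrow> sas_vector \<alpha> M X F)"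

definition scale_param :: "real \<Rightarrow> 'a measure \<Rightarrow> ('t \<Rightarrow> 'a \<Rightarrow> real) \<Rightarrow> 't \<Rightarrow> 't \<Rightarrow> real" where
  "scale_param \<alpha> M X s t =
     (THE r. r \<ge> 0 \<and> (\<forall>u::real. (CLINT \<omega>|M. iexp (u * (X t \<omega> - X s \<omega>)))
                 = complex_of_real (exp (- (r powr \<alpha> * \<bar>u\<bar> powr \<alpha>)))))"

definition pdiam :: "('t \<Rightarrow> 't \<Rightarrow> real) \<Rightarrow> 't set \<Rightarrow> real" where
  "pdiam d T = Sup {d s t | s t. s \<in> T \<and> t \<in> T}"

definition covering_number :: "('t \<Rightarrow> 't \<Rightarrow> real) \<Rightarrow> 't set \<Rightarrow> real \<Rightarrow> nat" where
  "covering_number d T \<epsilon> =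
     Inf {card S | S. finite S \<and> S \<subseteq> T \<and> (\<forall>t\<in>T. \<exists>s\<in>S. d t s \<le> \<epsilon>)}"

text \<open>(T,d) relatively compact, i.e. totally bounded: finite eps-nets exist for every eps > 0.\<close>
definition rel_compact :: "('t \<Rightarrow> 't \<Rightarrow> real) \<Rightarrow> 't set \<Rightarrow> bool" where
  "rel_compact d T \<longleftrightarrow>
     (\<forall>\<epsilon>>0. \<exists>S. finite S \<and> S \<subseteq> T \<and> (\<forall>t\<in>T. \<exists>s\<in>S. d t s \<le> \<epsilon>))"

definition separable_process :: "'a measure \<Rightarrow> ('t \<Rightarrow> 'a \<Rightarrow> real) \<Rightarrow> 't set \<Rightarrow> ('t \<Rightarrow> 't \<Rightarrow> real) \<Rightarrow> bool" where
  "separable_process M X T d \<longleftrightarrow>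
     (\<exists>T0 N. countable T0 \<and> T0 \<subseteq> T \<and> N \<in> null_sets M \<and>
        (\<forall>\<omega>\<in>space M - N. \<forall>t\<in>T. \<exists>s :: nat \<Rightarrow> 't. (\<forall>n. s n \<in> T0) \<and>
            (\<lambda>n. d (s n) t) \<longlonglongrightarrow> 0 \<and> (\<lambda>n. X (s n) \<omega>) \<longlonglongrightarrow> X t \<omega>))"

end

theory Submission
  imports Defs
begin

lemma levy_main_bound:
  assumes "real_distribution D" and "u > 0"
  shows "Re (CLBINT t:{-u..u}. 1 - char D t) \<ge> u * measure D {x. abs x \<ge> 2 / u}"
proof -
  interpret Mn: real_distribution D by fact
  have *: "\<And>u x. u > 0 \<Longrightarrow> x \<noteq> 0 \<Longrightarrow> (CLBINT t:{-u..u}. 1 - iexp (t * x)) =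
      2 * (u  - sin (u * x) / x)"
  proof -
    fix u :: real and x :: real
    assume "u > 0" and "x \<noteq> 0"
    hence "(CLBINT t:{-u..u}. 1 - iexp (t * x)) = (CLBINT t=-u..u. 1 - iexp (t * x))"
      by (subst interval_integral_Icc, auto)
    also have "\<dots> = (CLBINT t=-u..ereal 0. 1 - iexp (t * x)) + (CLBINT t= ereal 0..u. 1 - iexp (t * x))"
      using \<open>u > 0\<close>
      by (subst interval_integral_sum; force simp add: interval_integrable_isCont)
    also have "\<dots> = (CLBINT t=ereal 0..u. 1 - iexp (t * -x)) + (CLBINT t=ereal 0..u. 1 - iexp (t * x))"
      by (subst interval_integral_reflect, auto)
    also have "... = CLBINT xa=ereal 0..ereal u. 1 - iexp (xa * - x) + (1 - iexp (xa * x))"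
      by (subst interval_lebesgue_integral_add (2) [symmetric]) (auto simp: interval_integrable_isCont)
    also have "\<dots> = (LBINT t=ereal 0..u. 2 - 2 * cos (t * x))"
      unfolding exp_Euler cos_of_real by (simp flip: interval_lebesgue_integral_of_real)
    also have "\<dots> = 2 * u - 2 * sin (u * x) / x"
      by (subst interval_lebesgue_integral_diff)
         (auto intro!: interval_integrable_isCont
               simp: interval_lebesgue_integral_of_real integral_cos [OF \<open>x \<noteq> 0\<close>] mult.commute[of _ x])
    finally show "(CLBINT t:{-u..u}. 1 - iexp (t * x)) = 2 * (u  - sin (u * x) / x)"
      by (simp add: field_simps)
  qed
    interpret P: pair_sigma_finite "D" lborel ..
    have Mn1 [simp]: "measure (D) UNIV = 1" by (metis Mn.prob_space Mn.space_eq_univ)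
    have Mn2 [simp]: "\<And>x. complex_integrable (D) (\<lambda>t. exp (\<i> * complex_of_real (x * t)))"
      by (rule Mn.integrable_const_bound [where B = 1], auto)
    have Mn3: "set_integrable (D \<Otimes>\<^sub>M lborel) (UNIV \<times> {- u..u}) (\<lambda>a. 1 - exp (\<i> * complex_of_real (snd a * fst a)))"
      using \<open>0 < u\<close>
      unfolding set_integrable_def
      by (intro integrableI_bounded_set_indicator [where B="2"])
         (auto simp: lborel.emeasure_pair_measure_Times ennreal_mult_less_top not_less top_unique
               split: split_indicator
               intro!: order_trans [OF norm_triangle_ineq4])
    have "(CLBINT t:{-u..u}. 1 - char (D) t) =
        (CLBINT t:{-u..u}. (CLINT x | D. 1 - iexp (t * x)))"
      unfolding char_def by (rule set_lebesgue_integral_cong, auto simp del: of_real_mult)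
    also have "\<dots> = (CLBINT t. (CLINT x | D. indicator {-u..u} t *\<^sub>R (1 - iexp (t * x))))"
      unfolding set_lebesgue_integral_def
      by (rule Bochner_Integration.integral_cong) (auto split: split_indicator)
    also have "\<dots> = (CLINT x | D. (CLBINT t:{-u..u}. 1 - iexp (t * x)))"
      using Mn3 by (subst P.Fubini_integral) (auto simp: indicator_times split_beta' set_integrable_def set_lebesgue_integral_def)
    also have "\<dots> = (CLINT x | D. (if x = 0 then 0 else 2 * (u  - sin (u * x) / x)))"
      using \<open>u > 0\<close> by (intro Bochner_Integration.integral_cong, auto simp add: * simp del: of_real_mult)
    also have "\<dots> = (LINT x | D. (if x = 0 then 0 else 2 * (u  - sin (u * x) / x)))"
      by (rule integral_complex_of_real)
    finally have "Re (CLBINT t:{-u..u}. 1 - char (D) t) =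
       (LINT x | D. (if x = 0 then 0 else 2 * (u  - sin (u * x) / x)))" by simp
    also have "\<dots> \<ge> (LINT x : {x. abs x \<ge> 2 / u} | D. u)"
    proof -
      have "complex_integrable (D) (\<lambda>x. CLBINT t:{-u..u}. 1 - iexp (snd (x, t) * fst (x, t)))"
        using Mn3 unfolding set_integrable_def set_lebesgue_integral_def
        by (intro P.integrable_fst) (simp add: indicator_times split_beta')
      hence "complex_integrable (D) (\<lambda>x. if x = 0 then 0 else 2 * (u  - sin (u * x) / x))"
        using \<open>u > 0\<close>
        unfolding set_integrable_def
        by (subst Bochner_Integration.integrable_cong) (auto simp add: * simp del: of_real_mult)
      hence **: "integrable (D) (\<lambda>x. if x = 0 then 0 else 2 * (u  - sin (u * x) / x))"
        unfolding complex_of_real_integrable_eq .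
      have "2 * sin x \<le> x" if "2 \<le> x" for x :: real
        by (rule order_trans[OF _ \<open>2 \<le> x\<close>]) auto
      moreover have "x \<le> 2 * sin x" if "x \<le> - 2" for x :: real
        by (rule order_trans[OF \<open>x \<le> - 2\<close>]) auto
      moreover have "x < 0 \<Longrightarrow> x \<le> sin x" for x :: real
        using sin_x_le_x[of "-x"] by simp
      ultimately show ?thesis
        using \<open>u > 0\<close> unfolding set_lebesgue_integral_def
        by (intro integral_mono [OF _ **])
           (auto simp: divide_simps sin_x_le_x mult.commute[of u] mult_neg_pos top_unique less_top[symmetric]
                 split: split_indicator)
    qed
    also (xtrans) have "(LINT x : {x. abs x \<ge> 2 / u} | D. u) = u * measure (D) {x. abs x \<ge> 2 / u}"
      unfolding set_lebesgue_integral_def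
      by (simp add: Mn.emeasure_eq_measure)
    finally show "Re (CLBINT t:{-u..u}. 1 - char (D) t) \<ge> u * measure (D) {x. abs x \<ge> 2 / u}" .
qed


lemma stable_tail:
  fixes M :: "'a measure" and Y :: "'a \<Rightarrow> real"
  assumes M: "prob_space M" and Y: "Y \<in> borel_measurable M" and r: "r \<ge> 0" and a: "\<alpha> > 0" and x: "x > 0"
    and ch: "\<And>u. (CLINT \<omega>|M. iexp (u * Y \<omega>)) = complex_of_real (exp (- (r powr \<alpha> * \<bar>u\<bar> powr \<alpha>)))"
  shows "measure M {\<omega>\<in>space M. x \<le> \<bar>Y \<omega>\<bar>} \<le> 2 * 2 powr \<alpha> * r powr \<alpha> / x powr \<alpha>"
proof -
  interpret prob_space M by fact
  define D where "D = distr M borel Y"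
  have RD: "real_distribution D" unfolding D_def using Y by auto
  define v where "v = 2 / x"
  have v: "v > 0" using x by (simp add: v_def)
  have chD: "char D w = complex_of_real (exp (- (r powr \<alpha> * \<bar>w\<bar> powr \<alpha>)))" for w
  proof -
    have "char D w = (CLINT \<omega>|M. iexp (w * Y \<omega>))"
      unfolding char_def D_def using Y by (subst integral_distr) auto
    then show ?thesis using ch by simp
  qed
  have mD: "measure D {z. 2 / v \<le> \<bar>z\<bar>} = measure M {\<omega>\<in>space M. x \<le> \<bar>Y \<omega>\<bar>}"
  proof -
    have "measure D {z. 2 / v \<le> \<bar>z\<bar>} = measure M (Y -` {z. 2 / v \<le> \<bar>z\<bar>} \<inter> space M)"
      unfolding D_def using Y by (subst measure_distr) auto
    also have "Y -` {z. 2 / v \<le> \<bar>z\<bar>} \<inter> space M = {\<omega>\<in>space M. x \<le> \<bar>Y \<omega>\<bar>}"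
      using x by (auto simp: v_def)
    finally show ?thesis .
  qed
  define f where "f w = 1 - exp (- (r powr \<alpha> * \<bar>w\<bar> powr \<alpha>))" for w
  have cf: "continuous_on {-v..v} f" unfolding f_def
    by (intro continuous_intros continuous_on_powr') (use a in auto)
  have "(CLBINT t:{-v..v}. 1 - char D t) = (CLBINT t:{-v..v}. complex_of_real (f t))"
    by (rule set_lebesgue_integral_cong) (auto simp: chD f_def)
  also have "\<dots> = complex_of_real (LBINT t:{-v..v}. f t)"
    by (rule set_integral_complex_of_real)
  finally have e1: "Re (CLBINT t:{-v..v}. 1 - char D t) = (LBINT t:{-v..v}. f t)" by simp
  have "(LBINT t:{-v..v}. f t) \<le> (LBINT t:{-v..v}. r powr \<alpha> * v powr \<alpha>)"
  proof (rule set_integral_mono)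
    show "set_integrable lborel {- v..v} f"
      unfolding set_integrable_def by (rule borel_integrable_compact) (auto simp: cf)
    show "set_integrable lborel {- v..v} (\<lambda>t. r powr \<alpha> * v powr \<alpha>)"
      unfolding set_integrable_def by (rule borel_integrable_compact) (auto intro: continuous_intros)
    fix t assume t: "t \<in> {-v..v}"
    have "f t \<le> r powr \<alpha> * \<bar>t\<bar> powr \<alpha>"
      unfolding f_def using exp_ge_add_one_self[of "- (r powr \<alpha> * \<bar>t\<bar> powr \<alpha>)"] by linarith
    also have "\<dots> \<le> r powr \<alpha> * v powr \<alpha>"
      using t a by (intro mult_left_mono powr_mono2) auto
    finally show "f t \<le> r powr \<alpha> * v powr \<alpha>" .
  qed
  also have "\<dots> = 2 * v * (r powr \<alpha> * v powr \<alpha>)"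
    using v by (simp add: set_integral_const)
  finally have "(LBINT t:{-v..v}. f t) \<le> 2 * v * (r powr \<alpha> * v powr \<alpha>)" .
  then have "v * measure M {\<omega>\<in>space M. x \<le> \<bar>Y \<omega>\<bar>} \<le> 2 * v * (r powr \<alpha> * v powr \<alpha>)"
  proof -
    have "v * measure M {\<omega>\<in>space M. x \<le> \<bar>Y \<omega>\<bar>} = v * measure D {z. 2 / v \<le> \<bar>z\<bar>}"
      using mD by simp
    also have "\<dots> \<le> Re (CLBINT t:{-v..v}. 1 - char D t)" by (rule levy_main_bound[OF RD v])
    also have "\<dots> = (LBINT t:{-v..v}. f t)" by (rule e1)
    finally show ?thesis using \<open>(LBINT t:{-v..v}. f t) \<le> 2 * v * (r powr \<alpha> * v powr \<alpha>)\<close> by linarith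
  qed
  then have "measure M {\<omega>\<in>space M. x \<le> \<bar>Y \<omega>\<bar>} \<le> 2 * (r powr \<alpha> * v powr \<alpha>)"
    using v by (simp add: mult.assoc)
  also have "v powr \<alpha> = 2 powr \<alpha> / x powr \<alpha>"
    unfolding v_def using x by (simp add: powr_divide)
  finally show ?thesis by (simp add: mult_ac)
qed

lemma scale_param_char:
  assumes sas: "sas_process \<alpha> M X T" and M: "prob_space M" and a: "\<alpha> > 0" and s: "s \<in> T" and t: "t \<in> T"
  shows "scale_param \<alpha> M X s t \<ge> 0 \<and> (\<forall>u. (CLINT \<omega>|M. iexp (u * (X t \<omega> - X s \<omega>)))
                 = complex_of_real (exp (- (scale_param \<alpha> M X s t powr \<alpha> * \<bar>u\<bar> powr \<alpha>))))"
proof -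
  define F where "F = {s, t}"
  have "sas_vector \<alpha> M X F" using sas s t unfolding sas_process_def F_def by auto
  then obtain \<Gamma> where G: "\<forall>u :: _ \<Rightarrow> real.
             (CLINT \<omega>|M. iexp (\<Sum>i\<in>F. u i * X i \<omega>))
               = complex_of_real (exp (- (\<integral>s. \<bar>\<Sum>i\<in>F. u i * s i\<bar> powr \<alpha> \<partial>\<Gamma>)))"
    unfolding sas_vector_def by blast
  define I where "I = (\<integral>y. \<bar>y t - y s\<bar> powr \<alpha> \<partial>\<Gamma>)"
  have I0: "I \<ge> 0" unfolding I_def by (rule Bochner_Integration.integral_nonneg) auto
  define r where "r = I powr (1 / \<alpha>)"
  have r0: "r \<ge> 0" by (simp add: r_def)
  have rI: "r powr \<alpha> = I" using I0 a unfolding r_def by (simp add: powr_powr)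
  define w where "w u i = (if i = t then u else 0) - (if i = s then u else (0::real))" for u i
  have sumw: "(\<Sum>i\<in>F. w u i * y i) = u * (y t - y s)" for u and y :: "_ \<Rightarrow> real"
    unfolding F_def w_def by (cases "s = t") (auto simp: algebra_simps)
  have P: "(CLINT \<omega>|M. iexp (u * (X t \<omega> - X s \<omega>))) = complex_of_real (exp (- (r powr \<alpha> * \<bar>u\<bar> powr \<alpha>)))" for u
  proof -
    have "(CLINT \<omega>|M. iexp (u * (X t \<omega> - X s \<omega>))) = (CLINT \<omega>|M. iexp (\<Sum>i\<in>F. w u i * X i \<omega>))"
      by (simp add: sumw)
    also have "\<dots> = complex_of_real (exp (- (\<integral>y. \<bar>\<Sum>i\<in>F. w u i * y i\<bar> powr \<alpha> \<partial>\<Gamma>)))"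
      using G by blast
    also have "(\<integral>y. \<bar>\<Sum>i\<in>F. w u i * y i\<bar> powr \<alpha> \<partial>\<Gamma>) = (\<integral>y. \<bar>u\<bar> powr \<alpha> * \<bar>y t - y s\<bar> powr \<alpha> \<partial>\<Gamma>)"
      by (simp add: sumw abs_mult powr_mult)
    also have "\<dots> = \<bar>u\<bar> powr \<alpha> * I" unfolding I_def by simp
    finally show ?thesis by (simp add: rI mult.commute)
  qed
  have uniq: "r' = r" if "r' \<ge> 0" and "\<forall>u. (CLINT \<omega>|M. iexp (u * (X t \<omega> - X s \<omega>)))
                 = complex_of_real (exp (- (r' powr \<alpha> * \<bar>u\<bar> powr \<alpha>)))" for r'
  proof -
    have e1: "(CLINT \<omega>|M. iexp (1 * (X t \<omega> - X s \<omega>))) = complex_of_real (exp (- (r' powr \<alpha>)))"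
      using spec[OF that(2), of 1] by simp
    have "complex_of_real (exp (- (r' powr \<alpha>))) = complex_of_real (exp (- (r powr \<alpha>)))"
      using P[of 1] e1 by simp
    then have "r' powr \<alpha> = r powr \<alpha>" by simp
    then have "(r' powr \<alpha>) powr (1/\<alpha>) = (r powr \<alpha>) powr (1/\<alpha>)" by simp
    then show ?thesis using a that(1) r0 by (simp add: powr_powr)
  qed
  have "scale_param \<alpha> M X s t = r"
    unfolding scale_param_def
    by (rule the_equality) (use r0 P uniq in auto)
  then show ?thesis using r0 P by simp
qed

lemma null_of_small:
  assumes M: "prob_space M" and A: "A \<in> sets M" and f: "f \<longlonglongrightarrow> 0" and le: "\<And>n. measure M A \<le> f n"
  shows "A \<in> null_sets M"
proof -
  interpret prob_space M by fact
  have "measure M A \<le> 0" by (rule LIMSEQ_le_const[OF f]) (use le in auto)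
  then have "measure M A = 0" using measure_nonneg[of M A] by linarith
  then show ?thesis using A by (intro null_setsI) (simp add: emeasure_eq_measure)
qed

lemma chain:
  fixes M :: "'a measure" and X :: "'t \<Rightarrow> 'a \<Rightarrow> real" and d :: "'t \<Rightarrow> 't \<Rightarrow> real"
    and S :: "nat \<Rightarrow> 't set" and e c :: "nat \<Rightarrow> real"
  assumes M: "prob_space M"
    and meas: "\<And>t. t \<in> T \<Longrightarrow> X t \<in> borel_measurable M"
    and K: "K \<ge> 0" and alpha: "\<alpha> > 0"
    and tail: "\<And>s t x. s \<in> T \<Longrightarrow> t \<in> T \<Longrightarrow> x > 0 \<Longrightarrow>
        measure M {\<omega>\<in>space M. x \<le> \<bar>X t \<omega> - X s \<omega>\<bar>} \<le> K * d s t powr \<alpha> / x powr \<alpha>"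
    and dnn: "\<And>s t. s \<in> T \<Longrightarrow> t \<in> T \<Longrightarrow> d s t \<ge> 0"
    and Sfin: "\<And>k. finite (S k)" and ST: "\<And>k. S k \<subseteq> T" and S0: "S 0 \<noteq> {}"
    and epos: "\<And>k. e k > 0" and elim: "e \<longlonglongrightarrow> 0"
    and cover: "\<And>k t. t \<in> T \<Longrightarrow> \<exists>u\<in>S k. d t u \<le> e k"
    and card: "\<And>k. real (card (S (Suc k))) \<le> c k" and cpos: "\<And>k. c k > 0"
    and summ: "summable (\<lambda>k. (e k powr \<alpha> * c k) powr (1 / (\<alpha> + 1)))"
    and T0: "countable T0" "T0 \<subseteq> T" and N: "N \<in> null_sets M"
    and sep: "\<And>\<omega> t. \<omega> \<in> space M - N \<Longrightarrow> t \<in> T \<Longrightarrow>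
        \<exists>s::nat \<Rightarrow> 't. (\<forall>n. s n \<in> T0) \<and> (\<lambda>n. X (s n) \<omega>) \<longlonglongrightarrow> X t \<omega>"
  shows "AE \<omega> in M. \<exists>B. \<forall>t\<in>T. \<bar>X t \<omega>\<bar> \<le> B"
proof -
  interpret prob_space M by fact
  define p where "p = 1 / (\<alpha> + 1)"
  have p: "p > 0" "p * \<alpha> = 1 - p" using alpha by (auto simp: p_def field_simps)
  define b where "b k = e k powr \<alpha> * c k" for k
  have bpos: "b k > 0" for k using epos[of k] cpos[of k] by (simp add: b_def)
  define a where "a k = b k powr p" for k
  have apos: "a k > 0" for k using bpos[of k] by (simp add: a_def)
  have suma: "summable a" using summ unfolding a_def b_def p_def .
  define par where "par k u = (SOME v. v \<in> S k \<and> d u v \<le> e k)" for k u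
  have par: "par k u \<in> S k \<and> d u (par k u) \<le> e k" if "u \<in> T" for k u
    unfolding par_def using someI_ex[OF cover[OF that, of k, unfolded Bex_def]] by blast
  have parT: "par k u \<in> T" if "u \<in> T" for k u using par[OF that] ST by blast
  have SsubT: "u \<in> T" if "u \<in> S k" for u k using ST that by blast
  define E where "E k u x = {\<omega>\<in>space M. x \<le> \<bar>X (par k u) \<omega> - X u \<omega>\<bar>}" for k u x
  have Eev: "E k u x \<in> events" if "u \<in> T" for k u x
  proof -
    have [measurable]: "X u \<in> borel_measurable M" "X (par k u) \<in> borel_measurable M"
      using meas that parT by auto
    show ?thesis unfolding E_def by measurable
  qed
  have Ele: "prob (E k u x) \<le> K * e k powr \<alpha> / x powr \<alpha>" if "u \<in> T" "x > 0" for k u x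
  proof -
    have "prob (E k u x) \<le> K * d u (par k u) powr \<alpha> / x powr \<alpha>"
      unfolding E_def by (rule tail) (use that parT in auto)
    also have "\<dots> \<le> K * e k powr \<alpha> / x powr \<alpha>"
      using par[OF that(1), of k] dnn[OF that(1) parT[OF that(1)]] K alpha
      by (intro divide_right_mono mult_left_mono powr_mono2) auto
    finally show ?thesis .
  qed
  define A where "A n k = (\<Union>u\<in>S (Suc k). E k u (real (Suc n) * a k))" for n k
  have Aev: "A n k \<in> events" for n k
    unfolding A_def by (intro sets.finite_UN Sfin ballI Eev) (use ST in blast)
  have Ale: "prob (A n k) \<le> K / real (Suc n) powr \<alpha> * a k" for n k
  proof -
    have x: "real (Suc n) * a k > 0" using apos[of k] by simp
    have "prob (A n k) \<le> (\<Sum>u\<in>S (Suc k). prob (E k u (real (Suc n) * a k)))"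
      unfolding A_def using Sfin by (intro finite_measure_subadditive_finite) (auto intro!: Eev SsubT)
    also have "\<dots> \<le> (\<Sum>u\<in>S (Suc k). K * e k powr \<alpha> / (real (Suc n) * a k) powr \<alpha>)"
      using ST x by (intro sum_mono Ele) auto
    also have "\<dots> = real (card (S (Suc k))) * (K * e k powr \<alpha> / (real (Suc n) * a k) powr \<alpha>)"
      by simp
    also have "\<dots> \<le> c k * (K * e k powr \<alpha> / (real (Suc n) * a k) powr \<alpha>)"
      using card[of k] K by (intro mult_right_mono) auto
    also have "\<dots> = K / real (Suc n) powr \<alpha> * (b k / a k powr \<alpha>)"
    proof -
      have "(real (Suc n) * a k) powr \<alpha> = real (Suc n) powr \<alpha> * a k powr \<alpha>"
        using apos[of k] by (simp add: powr_mult)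
      then show ?thesis using apos[of k] by (simp add: b_def field_simps)
    qed
    also have "b k / a k powr \<alpha> = a k"
    proof -
      have "a k powr \<alpha> = b k powr (1 - p)" unfolding a_def using bpos[of k] p
        by (simp add: powr_powr mult.commute)
      then have "b k / a k powr \<alpha> = b k powr 1 / b k powr (1 - p)" using bpos[of k] by simp
      also have "\<dots> = b k powr (1 - (1 - p))" by (rule powr_diff[symmetric])
      also have "\<dots> = b k powr p" by simp
      finally show ?thesis by (simp add: a_def)
    qed
    finally show ?thesis .
  qed
  define Bad where "Bad n = (\<Union>k. A n k)" for n
  have Badev: "Bad n \<in> events" for n unfolding Bad_def using Aev by auto
  have Badle: "prob (Bad n) \<le> K * suminf a * real (Suc n) powr (- \<alpha>)" for n
  proof -
    have s1: "summable (\<lambda>k. K / real (Suc n) powr \<alpha> * a k)" using suma by (rule summable_mult)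
    have s2: "summable (\<lambda>k. prob (A n k))"
      by (rule summable_comparison_test[OF _ s1]) (use Ale in auto)
    have "prob (Bad n) \<le> (\<Sum>k. prob (A n k))"
      unfolding Bad_def using Aev s2 by (intro finite_measure_subadditive_countably) auto
    also have "\<dots> \<le> (\<Sum>k. K / real (Suc n) powr \<alpha> * a k)"
      by (rule suminf_le[OF Ale s2 s1])
    also have "\<dots> = K / real (Suc n) powr \<alpha> * suminf a" using suma by (rule suminf_mult)
    also have "\<dots> = K * suminf a * real (Suc n) powr (- \<alpha>)" by (simp add: powr_minus divide_inverse)
    finally show ?thesis .
  qed
  define Z where "Z = (\<Inter>n. Bad n)"
  have Znull: "Z \<in> null_sets M"
  proof (rule null_of_small[OF M])
    show "Z \<in> events" unfolding Z_def using Badev by auto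
    have "(\<lambda>n. real (Suc n) powr (- \<alpha>)) \<longlonglongrightarrow> 0"
      by (rule tendsto_neg_powr[OF _ filterlim_compose[OF filterlim_real_sequentially filterlim_Suc]])
         (use alpha in auto)
    then show "(\<lambda>n. K * suminf a * real (Suc n) powr (- \<alpha>)) \<longlonglongrightarrow> 0"
      by (rule tendsto_mult_right_zero)
    show "prob Z \<le> K * suminf a * real (Suc n) powr (- \<alpha>)" for n
    proof -
      have "prob Z \<le> prob (Bad n)" by (rule finite_measure_mono) (auto simp: Z_def Badev)
      then show ?thesis using Badle[of n] by linarith
    qed
  qed
  define R where "R t = (\<Inter>k. E k t 1)" for t
  have Rnull: "R t \<in> null_sets M" if "t \<in> T" for t
  proof (rule null_of_small[OF M])
    show "R t \<in> events" unfolding R_def using Eev that by auto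
    have "(\<lambda>k. e k powr \<alpha>) \<longlonglongrightarrow> 0"
      by (rule tendsto_zero_powrI[OF elim tendsto_const]) (use epos alpha in \<open>auto intro: always_eventually less_imp_le\<close>)
    then show "(\<lambda>k. K * e k powr \<alpha>) \<longlonglongrightarrow> 0" by (rule tendsto_mult_right_zero)
    show "prob (R t) \<le> K * e k powr \<alpha>" for k
    proof -
      have "prob (R t) \<le> prob (E k t 1)" by (rule finite_measure_mono) (auto simp: R_def Eev that)
      then show ?thesis using Ele[OF that, of 1 k] by simp
    qed
  qed
  define NN where "NN = Z \<union> N \<union> (\<Union>t\<in>T0. R t)"
  have NN: "NN \<in> null_sets M"
    unfolding NN_def using Znull N T0 Rnull by (intro null_sets.Un null_sets_UN') auto
  show ?thesis
  proof (rule AE_I'[OF NN], safe)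
    fix \<omega> assume \<omega>: "\<omega> \<in> space M" and nb: "\<nexists>B. \<forall>t\<in>T. \<bar>X t \<omega>\<bar> \<le> B"
    show "\<omega> \<in> NN"
    proof (rule ccontr)
      assume "\<omega> \<notin> NN"
      then have nZ: "\<omega> \<notin> Z" and nN: "\<omega> \<notin> N" and nR: "\<And>t. t \<in> T0 \<Longrightarrow> \<omega> \<notin> R t"
        unfolding NN_def by auto
      obtain n where nB: "\<omega> \<notin> Bad n" using nZ unfolding Z_def by auto
      have link: "\<bar>X u \<omega>\<bar> \<le> \<bar>X (par k u) \<omega>\<bar> + real (Suc n) * a k" if "u \<in> S (Suc k)" for k u
      proof -
        have "\<omega> \<notin> E k u (real (Suc n) * a k)" using nB that unfolding Bad_def A_def by auto
        then have "\<bar>X (par k u) \<omega> - X u \<omega>\<bar> < real (Suc n) * a k" using \<omega> unfolding E_def by auto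
        then show ?thesis by linarith
      qed
      define M0 where "M0 = Max ((\<lambda>v. \<bar>X v \<omega>\<bar>) ` S 0)"
      have levels: "\<forall>u\<in>S m. \<bar>X u \<omega>\<bar> \<le> M0 + real (Suc n) * (\<Sum>k<m. a k)" for m
      proof (induction m)
        case 0
        then show ?case unfolding M0_def using Sfin by (auto intro: Max_ge)
      next
        case (Suc m)
        show ?case
        proof
          fix u assume u: "u \<in> S (Suc m)"
          have uT: "u \<in> T" using u ST by auto
          have "\<bar>X u \<omega>\<bar> \<le> \<bar>X (par m u) \<omega>\<bar> + real (Suc n) * a m" by (rule link[OF u])
          also have "\<dots> \<le> M0 + real (Suc n) * (\<Sum>k<m. a k) + real (Suc n) * a m"
            using Suc.IH par[OF uT, of m] by auto
          finally show "\<bar>X u \<omega>\<bar> \<le> M0 + real (Suc n) * (\<Sum>k<Suc m. a k)"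
            by (simp add: algebra_simps)
        qed
      qed
      define B0 where "B0 = M0 + real (Suc n) * suminf a"
      have lev: "\<bar>X u \<omega>\<bar> \<le> B0" if "u \<in> S m" for m u
      proof -
        have "(\<Sum>k<m. a k) \<le> suminf a"
          using suma apos by (intro sum_le_suminf) (auto intro: less_imp_le)
        then have "real (Suc n) * (\<Sum>k<m. a k) \<le> real (Suc n) * suminf a"
          by (intro mult_left_mono) auto
        moreover have "\<bar>X u \<omega>\<bar> \<le> M0 + real (Suc n) * (\<Sum>k<m. a k)" using levels[of m] that by blast
        ultimately show ?thesis unfolding B0_def by linarith
      qed
      have t0: "\<bar>X t \<omega>\<bar> \<le> B0 + 1" if tT0: "t \<in> T0" for t
      proof -
        have tT: "t \<in> T" using tT0 T0 by auto
        obtain k where "\<omega> \<notin> E k t 1" using nR[OF tT0] unfolding R_def by auto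
        then have "\<bar>X (par k t) \<omega> - X t \<omega>\<bar> < 1" using \<omega> unfolding E_def by auto
        moreover have "\<bar>X (par k t) \<omega>\<bar> \<le> B0" using lev par[OF tT, of k] by auto
        ultimately show ?thesis by linarith
      qed
      have "\<forall>t\<in>T. \<bar>X t \<omega>\<bar> \<le> B0 + 1"
      proof
        fix t assume t: "t \<in> T"
        obtain s where s: "\<forall>n. s n \<in> T0" "(\<lambda>n. X (s n) \<omega>) \<longlonglongrightarrow> X t \<omega>"
          using sep[OF _ t] \<omega> nN by blast
        have "(\<lambda>n. \<bar>X (s n) \<omega>\<bar>) \<longlonglongrightarrow> \<bar>X t \<omega>\<bar>" by (rule tendsto_rabs[OF s(2)])
        then show "\<bar>X t \<omega>\<bar> \<le> B0 + 1"
          by (rule LIMSEQ_le_const2) (use s(1) t0 in auto)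
      qed
      then show False using nb by blast
    qed
  qed
qed

lemma psi_summable:
  fixes \<Psi> :: "real \<Rightarrow> real"
  assumes sig: "\<sigma> > 0" and alpha: "\<alpha> > 0"
    and anti: "antimono_on {0<..} \<Psi>" and cont: "continuous_on {0<..} \<Psi>"
    and Psi1: "\<And>\<epsilon>. \<epsilon> > 0 \<Longrightarrow> \<Psi> \<epsilon> \<ge> 1"
    and int: "(\<integral>\<^sup>+ u \<in> {0<..\<sigma>}. ennreal ((\<Psi> u / u) powr (1 / (\<alpha> + 1))) \<partial>lborel) < \<infinity>"
  shows "summable (\<lambda>k. ((\<sigma> / 2 ^ k) powr \<alpha> * \<Psi> (\<sigma> / 2 ^ Suc k)) powr (1 / (\<alpha> + 1)))"
proof -
  define p where "p = 1 / (\<alpha> + 1)"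
  have p: "p > 0" "\<alpha> * p = 1 - p" using alpha by (auto simp: p_def field_simps)
  define f where "f k = \<sigma> / 2 ^ Suc k" for k :: nat
  have fpos: "f k > 0" for k using sig by (simp add: f_def)
  define I where "I k = {f k / 2 <.. f k}" for k
  define t where "t k = (\<Psi> (f k) / f k) powr p" for k
  have tnn: "t k \<ge> 0" for k by (simp add: t_def)
  define \<Phi> where "\<Phi> u = indicator {0<..} u *\<^sub>R \<Psi> u" for u :: real
  have [measurable]: "\<Phi> \<in> borel_measurable borel"
    unfolding \<Phi>_def by (rule borel_measurable_continuous_on_indicator) (auto simp: cont)
  define G where "G u = ennreal ((\<Phi> u / u) powr p)" for u
  have Gm [measurable]: "G \<in> borel_measurable borel" unfolding G_def by measurable
  have Gpos: "G u = ennreal ((\<Psi> u / u) powr p)" if "u > 0" for u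
    using that by (simp add: G_def \<Phi>_def)
  have disj: "disjoint_family I"
  proof -
    have "I k \<inter> I l = {}" if "k < l" for k l
    proof -
      have "(2::real) ^ Suc (Suc k) \<le> 2 ^ Suc l" using that power_increasing[of "Suc (Suc k)" "Suc l" "2::real"] by linarith
      then have h: "(2::real) * 2 ^ Suc k \<le> 2 ^ Suc l" by simp
      have "\<sigma> / 2 ^ Suc l \<le> \<sigma> / (2 * 2 ^ Suc k)"
        by (rule divide_left_mono) (use sig h in auto)
      then have "f l \<le> f k / 2" unfolding f_def by simp
      then show ?thesis unfolding I_def by auto
    qed
    then show ?thesis unfolding disjoint_family_on_def
      by (metis inf_commute linorder_neqE_nat)
  qed
  have Usub: "(\<Union>k. I k) \<subseteq> {0<..\<sigma>}"
  proof -
    have "f k \<le> \<sigma>" for k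
    proof -
      have "(1::real) \<le> 2 ^ Suc k" by (rule one_le_power) auto
      then show ?thesis using sig unfolding f_def by (simp add: divide_le_eq del: power_Suc)
    qed
    then show ?thesis unfolding I_def using fpos by (force intro: order_trans)
  qed
  have lower: "ennreal (f k / 2 * t k) \<le> (\<integral>\<^sup>+ u. G u * indicator (I k) u \<partial>lborel)" for k
  proof -
    have "ennreal (f k / 2 * t k) = (\<integral>\<^sup>+ u. ennreal (t k) * indicator (I k) u \<partial>lborel)"
      using fpos[of k] tnn[of k] unfolding I_def
      by (subst nn_integral_cmult_indicator) (auto simp: ennreal_mult[symmetric] mult.commute)
    also have "\<dots> \<le> (\<integral>\<^sup>+ u. G u * indicator (I k) u \<partial>lborel)"
    proof (rule nn_integral_mono)
      fix u show "ennreal (t k) * indicator (I k) u \<le> G u * indicator (I k) u"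
      proof (cases "u \<in> I k")
        case True
        then have u: "u > 0" "u \<le> f k" unfolding I_def using fpos[of k]
          by (auto intro: less_trans[rotated])
        have "\<Psi> (f k) \<le> \<Psi> u" using monotone_onD[OF anti, of u "f k"] u fpos[of k] by auto
        moreover have "\<Psi> (f k) \<ge> 0" using Psi1[OF fpos[of k]] by linarith
        ultimately have "\<Psi> (f k) / f k \<le> \<Psi> u / u"
          using u fpos[of k] by (intro frac_le) auto
        then have "t k \<le> (\<Psi> u / u) powr p" unfolding t_def
          using \<open>\<Psi> (f k) \<ge> 0\<close> fpos[of k] p by (intro powr_mono2) auto
        then show ?thesis using True Gpos[OF u(1)] by auto
      qed auto
    qed
    finally show ?thesis .
  qed
  have "(\<Sum>k. (\<integral>\<^sup>+ u. G u * indicator (I k) u \<partial>lborel))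
      = (\<integral>\<^sup>+ u. (\<Sum>k. G u * indicator (I k) u) \<partial>lborel)"
    unfolding I_def by (rule nn_integral_suminf[symmetric]) measurable
  also have "\<dots> = (\<integral>\<^sup>+ u. G u * indicator (\<Union>k. I k) u \<partial>lborel)"
    by (simp add: suminf_indicator[OF disj])
  also have "\<dots> \<le> (\<integral>\<^sup>+ u. G u * indicator {0<..\<sigma>} u \<partial>lborel)"
    using Usub by (intro nn_integral_mono mult_left_mono) (auto split: split_indicator simp del: greaterThanAtMost_iff dest!: subsetD)
  also have "\<dots> = (\<integral>\<^sup>+ u \<in> {0<..\<sigma>}. ennreal ((\<Psi> u / u) powr p) \<partial>lborel)"
    by (intro nn_integral_cong) (auto simp: Gpos split: split_indicator)
  also have "\<dots> < \<infinity>" using int unfolding p_def .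
  finally have fin: "(\<Sum>k. (\<integral>\<^sup>+ u. G u * indicator (I k) u \<partial>lborel)) < \<infinity>" .
  define C where "C = 2 * 2 powr (\<alpha> * p)"
  have term_eq: "((\<sigma> / 2 ^ k) powr \<alpha> * \<Psi> (\<sigma> / 2 ^ Suc k)) powr p = C * (f k / 2 * t k)" for k
  proof -
    have psi: "\<Psi> (f k) > 0" using Psi1[OF fpos[of k]] by linarith
    have e2: "\<sigma> / 2 ^ k = 2 * f k" unfolding f_def by simp
    have "((\<sigma> / 2 ^ k) powr \<alpha> * \<Psi> (\<sigma> / 2 ^ Suc k)) powr p
        = ((2 * f k) powr \<alpha> * \<Psi> (f k)) powr p" by (simp only: e2 f_def[symmetric])
    also have "\<dots> = 2 powr (\<alpha> * p) * f k powr (\<alpha> * p) * \<Psi> (f k) powr p"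
      using fpos[of k] psi by (simp add: powr_mult powr_powr)
    also have "f k powr (\<alpha> * p) = f k * f k powr (- p)"
      using fpos[of k] p by (simp add: powr_diff powr_minus divide_inverse)
    also have "t k = \<Psi> (f k) powr p * f k powr (- p)"
    proof -
      have "t k = \<Psi> (f k) powr p / f k powr p"
        unfolding t_def using fpos[of k] psi by (simp add: powr_divide)
      then show ?thesis by (simp add: powr_minus divide_inverse)
    qed
    ultimately show ?thesis unfolding C_def by (simp add: algebra_simps)
  qed
  have Cpos: "C > 0" unfolding C_def by simp
  have "(\<Sum>k. ennreal (((\<sigma> / 2 ^ k) powr \<alpha> * \<Psi> (\<sigma> / 2 ^ Suc k)) powr p))
       \<le> (\<Sum>k. ennreal C * (\<integral>\<^sup>+ u. G u * indicator (I k) u \<partial>lborel))"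
  proof (rule suminf_le)
    fix k
    have "ennreal (((\<sigma> / 2 ^ k) powr \<alpha> * \<Psi> (\<sigma> / 2 ^ Suc k)) powr p) = ennreal C * ennreal (f k / 2 * t k)"
      unfolding term_eq[of k] using Cpos fpos[of k] tnn[of k] by (subst ennreal_mult) auto
    also have "\<dots> \<le> ennreal C * (\<integral>\<^sup>+ u. G u * indicator (I k) u \<partial>lborel)"
      by (intro mult_left_mono lower) auto
    finally show "ennreal (((\<sigma> / 2 ^ k) powr \<alpha> * \<Psi> (\<sigma> / 2 ^ Suc k)) powr p) \<le> ennreal C * (\<integral>\<^sup>+ u. G u * indicator (I k) u \<partial>lborel)" .
  qed auto
  also have "\<dots> = ennreal C * (\<Sum>k. (\<integral>\<^sup>+ u. G u * indicator (I k) u \<partial>lborel))" by simp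
  also have "\<dots> < \<infinity>" using fin by (simp add: ennreal_mult_less_top)
  finally have "(\<Sum>k. ennreal (((\<sigma> / 2 ^ k) powr \<alpha> * \<Psi> (\<sigma> / 2 ^ Suc k)) powr p)) \<noteq> top" by simp
  then show ?thesis unfolding p_def by (intro summable_suminf_not_top) auto
qed


theorem corollary1:
  fixes \<alpha> :: real and M :: "'a measure" and X :: "'t \<Rightarrow> 'a \<Rightarrow> real" and T :: "'t set"
    and \<Psi> :: "real \<Rightarrow> real" and C1 :: real
  defines "\<rho> \<equiv> scale_param \<alpha> M X"
  defines "\<sigma> \<equiv> pdiam \<rho> T"
  assumes "prob_space M"
    and "0 < \<alpha>" and "\<alpha> < 2"
    and "T \<noteq> {}"
    and "sas_process \<alpha> M X T"
    and "separable_process M X T \<rho>"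
    and "bdd_above {\<rho> s t | s t. s \<in> T \<and> t \<in> T}"
    and "rel_compact \<rho> T"
    and "\<And>\<epsilon>. \<epsilon> > 0 \<Longrightarrow> real (covering_number \<rho> T \<epsilon>) \<le> \<Psi> \<epsilon>"
    and "antimono_on {0<..} \<Psi>"
    and "continuous_on {0<..} \<Psi>"
    and "C1 > 1"
    and "\<And>\<epsilon>. 0 < \<epsilon> \<Longrightarrow> \<epsilon> \<le> \<sigma> \<Longrightarrow> C1 * \<Psi> \<epsilon> \<le> \<Psi> (\<epsilon> / 2)"
    and "(\<integral>\<^sup>+ u \<in> {0<..\<sigma>}. ennreal ((\<Psi> u / u) powr (1 / (\<alpha> + 1))) \<partial>lborel) < \<infinity>"
  shows "AE \<omega> in M. \<exists>B. \<forall>t\<in>T. \<bar>X t \<omega>\<bar> \<le> B"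
proof -
  note Mp = assms(3)
  interpret prob_space M by (rule Mp)
  have a: "\<alpha> > 0" using assms(4) .
  have meas: "\<And>t. t \<in> T \<Longrightarrow> X t \<in> borel_measurable M"
    using assms(7) unfolding sas_process_def by blast
  have sc: "\<rho> s t \<ge> 0 \<and> (\<forall>u. (CLINT \<omega>|M. iexp (u * (X t \<omega> - X s \<omega>)))
                 = complex_of_real (exp (- (\<rho> s t powr \<alpha> * \<bar>u\<bar> powr \<alpha>))))" if "s \<in> T" "t \<in> T" for s t
    unfolding \<rho>_def by (rule scale_param_char[OF assms(7) Mp a that])
  have dnn: "\<And>s t. s \<in> T \<Longrightarrow> t \<in> T \<Longrightarrow> \<rho> s t \<ge> 0" using sc by blast
  have tail: "measure M {\<omega>\<in>space M. x \<le> \<bar>X t \<omega> - X s \<omega>\<bar>} \<le> (2 * 2 powr \<alpha>) * \<rho> s t powr \<alpha> / x powr \<alpha>"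
    if st: "s \<in> T" "t \<in> T" and x: "x > 0" for s t x
  proof -
    have [measurable]: "X s \<in> borel_measurable M" "X t \<in> borel_measurable M" using meas st by auto
    show ?thesis
      by (rule stable_tail[OF Mp _ _ a x]) (use sc[OF st] in auto)
  qed
  obtain T0 N where T0: "countable T0" "T0 \<subseteq> T" and N: "N \<in> null_sets M"
    and sepN: "\<forall>\<omega>\<in>space M - N. \<forall>t\<in>T. \<exists>s :: nat \<Rightarrow> 't. (\<forall>n. s n \<in> T0) \<and>
            (\<lambda>n. \<rho> (s n) t) \<longlonglongrightarrow> 0 \<and> (\<lambda>n. X (s n) \<omega>) \<longlonglongrightarrow> X t \<omega>"
    using assms(8) unfolding separable_process_def by blast
  have sep: "\<exists>s::nat \<Rightarrow> 't. (\<forall>n. s n \<in> T0) \<and> (\<lambda>n. X (s n) \<omega>) \<longlonglongrightarrow> X t \<omega>"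
    if "\<omega> \<in> space M - N" "t \<in> T" for \<omega> t
    using sepN that by blast
  have main: "AE \<omega> in M. \<exists>B. \<forall>t\<in>T. \<bar>X t \<omega>\<bar> \<le> B"
    if "\<And>k. finite (S k)" "\<And>k. S k \<subseteq> T" "S 0 \<noteq> {}" "\<And>k. e k > 0" "e \<longlonglongrightarrow> 0"
       "\<And>k t. t \<in> T \<Longrightarrow> \<exists>u\<in>S k. \<rho> t u \<le> e k"
       "\<And>k. real (card (S (Suc k))) \<le> c k" "\<And>k. c k > 0"
       "summable (\<lambda>k. (e k powr \<alpha> * c k) powr (1 / (\<alpha> + 1)))"
    for S :: "nat \<Rightarrow> 't set" and e c :: "nat \<Rightarrow> real"
    by (rule chain[OF Mp meas _ a tail dnn that T0 N sep]) auto
  have le_sig: "\<rho> s t \<le> \<sigma>" if "s \<in> T" "t \<in> T" for s t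
    unfolding \<sigma>_def pdiam_def
  proof (rule cSup_upper)
    show "\<rho> s t \<in> {\<rho> s t |s t. s \<in> T \<and> t \<in> T}" using that by blast
    show "bdd_above {\<rho> s t |s t. s \<in> T \<and> t \<in> T}" by (rule assms(9))
  qed
  obtain t0 where t0: "t0 \<in> T" using assms(6) by blast
  have sig0: "\<sigma> \<ge> 0" using le_sig[OF t0 t0] dnn[OF t0 t0] by linarith
  have net: "\<exists>S. finite S \<and> S \<subseteq> T \<and> S \<noteq> {} \<and> (\<forall>t\<in>T. \<exists>s\<in>S. \<rho> t s \<le> \<epsilon>) \<and> real (card S) \<le> \<Psi> \<epsilon>"
    if \<epsilon>: "\<epsilon> > 0" for \<epsilon>
  proof -
    define Cs where "Cs = {card S | S. finite S \<and> S \<subseteq> T \<and> (\<forall>t\<in>T. \<exists>s\<in>S. \<rho> t s \<le> \<epsilon>)}"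
    have "\<exists>S. finite S \<and> S \<subseteq> T \<and> (\<forall>t\<in>T. \<exists>s\<in>S. \<rho> t s \<le> \<epsilon>)"
      using assms(10) \<epsilon> unfolding rel_compact_def by (elim allE impE)
    then obtain S0 where S0: "finite S0 \<and> S0 \<subseteq> T \<and> (\<forall>t\<in>T. \<exists>s\<in>S0. \<rho> t s \<le> \<epsilon>)"
      by (elim exE)
    have "card S0 \<in> Cs" unfolding Cs_def mem_Collect_eq using S0 by (intro exI[of _ S0]) simp
    then have "Cs \<noteq> {}" by (intro notI) simp
    then have "Inf Cs \<in> Cs" by (rule Inf_nat_def1)
    moreover obtain n where n: "n = Inf Cs" by blast
    ultimately have "n \<in> Cs" by simp
    then have "\<exists>S. n = card S \<and> finite S \<and> S \<subseteq> T \<and> (\<forall>t\<in>T. \<exists>s\<in>S. \<rho> t s \<le> \<epsilon>)"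
      unfolding Cs_def by (simp only: mem_Collect_eq)
    then obtain S where S: "n = card S" "finite S" "S \<subseteq> T" "\<forall>t\<in>T. \<exists>s\<in>S. \<rho> t s \<le> \<epsilon>"
      by (elim exE conjE) (rule that, assumption+)
    have "covering_number \<rho> T \<epsilon> = Inf Cs" unfolding covering_number_def Cs_def by (rule refl)
    then have "card S = covering_number \<rho> T \<epsilon>" using n S(1) by simp
    then have "real (card S) \<le> \<Psi> \<epsilon>" using assms(11)[OF \<epsilon>] by simp
    moreover have "S \<noteq> {}" using S(4) t0 by auto
    ultimately show ?thesis using S(2,3,4) by (intro exI[of _ S]) simp
  qed
  have Psi1: "\<Psi> \<epsilon> \<ge> 1" if eps: "\<epsilon> > 0" for \<epsilon>
  proof -
    obtain S where S: "finite S \<and> S \<subseteq> T \<and> S \<noteq> {} \<and> (\<forall>t\<in>T. \<exists>s\<in>S. \<rho> t s \<le> \<epsilon>) \<and> real (card S) \<le> \<Psi> \<epsilon>"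
      using net[OF eps] by (elim exE)
    have "card S > 0" using S by (simp add: card_gt_0_iff)
    then have "real (card S) \<ge> 1" by simp
    then show ?thesis using S by linarith
  qed
  show ?thesis
  proof (cases "\<sigma> > 0")
    case True
    define e where "e k = \<sigma> / 2 ^ k" for k :: nat
    have epos: "e k > 0" for k using True by (simp add: e_def)
    have "\<forall>k. \<exists>S. finite S \<and> S \<subseteq> T \<and> S \<noteq> {} \<and> (\<forall>t\<in>T. \<exists>s\<in>S. \<rho> t s \<le> e k) \<and> real (card S) \<le> \<Psi> (e k)"
      by (intro allI net epos)
    then have "\<exists>S. \<forall>k. finite (S k) \<and> S k \<subseteq> T \<and> S k \<noteq> {} \<and> (\<forall>t\<in>T. \<exists>s\<in>S k. \<rho> t s \<le> e k) \<and> real (card (S k)) \<le> \<Psi> (e k)"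
      by (rule choice)
    then obtain S where S: "\<forall>k. finite (S k) \<and> S k \<subseteq> T \<and> S k \<noteq> {} \<and> (\<forall>t\<in>T. \<exists>s\<in>S k. \<rho> t s \<le> e k) \<and> real (card (S k)) \<le> \<Psi> (e k)"
      by (elim exE)
    define c where "c k = \<Psi> (e (Suc k))" for k
    show ?thesis
    proof (rule main[of S e c])
      have "(\<lambda>k. \<sigma> / 2 ^ k) \<longlonglongrightarrow> 0" by (rule LIMSEQ_divide_realpow_zero) simp
      then show "e \<longlonglongrightarrow> 0" by (simp add: e_def[abs_def])
      show "c k > 0" for k unfolding c_def using Psi1[OF epos[of "Suc k"]] by linarith
      show "summable (\<lambda>k. (e k powr \<alpha> * c k) powr (1 / (\<alpha> + 1)))"
        unfolding e_def c_def
        by (rule psi_summable[OF True a assms(12) assms(13) Psi1 assms(16)])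
      show "finite (S k)" for k using S[rule_format, of k] by (elim conjE)
      show "S k \<subseteq> T" for k using S[rule_format, of k] by (elim conjE)
      show "S 0 \<noteq> {}" using S[rule_format, of 0] by (elim conjE)
      show "e k > 0" for k by (rule epos)
      show "\<exists>u\<in>S k. \<rho> t u \<le> e k" if tT: "t \<in> T" for k t
      proof -
        have "\<forall>t\<in>T. \<exists>s\<in>S k. \<rho> t s \<le> e k" using S[rule_format, of k] by (elim conjE)
        then show ?thesis using tT by (elim ballE) auto
      qed
      show "real (card (S (Suc k))) \<le> c k" for k unfolding c_def using S[rule_format, of "Suc k"] by (elim conjE)
    qed
  next
    case False
    then have sig: "\<sigma> = 0" using sig0 by linarith
    define e where "e k = 2 powr (- real k)" for k :: nat
    have epos: "e k > 0" for k by (simp add: e_def)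
    have e2: "e k = 1 / 2 ^ k" for k
      unfolding e_def by (simp add: powr_minus powr_realpow divide_inverse)
    show ?thesis
    proof (rule main[of "\<lambda>k. {t0}" e "\<lambda>k. 1"])
      have "(\<lambda>k. 1 / 2 ^ k :: real) \<longlonglongrightarrow> 0" by (rule LIMSEQ_divide_realpow_zero) simp
      moreover have "e = (\<lambda>k. 1 / 2 ^ k)" using e2 by (intro ext) simp
      ultimately show "e \<longlonglongrightarrow> 0" by simp
      show "\<exists>u\<in>{t0}. \<rho> t u \<le> e k" if "t \<in> T" for k t
        using le_sig[OF that t0] sig epos[of k] by auto
      define q where "q = 2 powr (- (\<alpha> * (1 / (\<alpha> + 1))))"
      have q: "norm q < 1" unfolding q_def using a by (simp add: powr_less_one)
      have "(e k powr \<alpha> * 1) powr (1 / (\<alpha> + 1)) = q ^ k" for k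
        unfolding e_def q_def by (simp add: powr_powr powr_power)
      then show "summable (\<lambda>k. (e k powr \<alpha> * 1) powr (1 / (\<alpha> + 1)))"
        using summable_geometric[OF q] by simp
    qed (use t0 epos in simp_all)
  qed
qed

end
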